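(* Let $\mathcal{H}$ be a finite-dimensional Hilbert space and let $\mathcal{E}$ be a unital quantum channel on $\mathcal{L}(\mathcal{H})$ (i.e. completely positive, trace-preserving, and $\mathcal{E}(I)=I$). Then the following four sets of operators coincide: (1) $MD(\mathcal{E})$; (2) $UCC(\mathcal{E})$; (3) $\mathcal{E}^\dagger(MD(\mathcal{E}^\dagger))$; (4) $\mathcal{E}^\dagger(UCC(\mathcal{E}^\dagger))$.
   Context: $\mathcal{E}^\dagger$ denotes the dual (Heisenberg-picture) map defined by $\mathrm{Tr}(\mathcal{E}(\rho)X)=\mathrm{Tr}(\rho\,\mathcal{E}^\dagger(X))$; if $\mathcal{E}(\rho)=\sum_iE_i\rho E_i^\dagger$ then $\mathcal{E}^\dagger(X)=\sum_iE_i^\dagger XE_i$. For a linear map $\phi$ on $\mathcal{L}(\mathcal{H})$, its multiplicative domain is $MD(\phi)=\{a\in\mathcal{L}(\mathcal{H}):\phi(a)\phi(b)=\phi(ab)\text{ and }\phi(b)\phi(a)=\phi(ba)\text{ for all }b\in\mathcal{L}(\mathcal{H})\}$. For a unital quantum channel $\Phi$ with Kraus operators $\{F_i\}$, $UCC(\Phi):=\{\rho\in\mathcal{L}(\mathcal{H}):\Phi^\dagger\circ\Phi(\rho)=\rho\}=\{\rho:[\rho,F_i^\dagger F_j]=0\text{ for all }i,j\}$. For a set $S$, $\mathcal{E}^\dagger(S)=\{\mathcal{E}^\dagger(s):s\in S\}$. *)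

theory Defs
  imports "HOL-Analysis.Analysis"
begin

text \<open>Operators on the finite-dimensional Hilbert space \<open>complex ^ 'n\<close> are
  matrices \<open>complex ^ 'n ^ 'n\<close>; \<open>**\<close> is composition.\<close>

definition adj :: "complex ^ 'n ^ 'n \<Rightarrow> complex ^ 'n ^ 'n" where
  "adj A = (\<chi> i j. cnj (A $ j $ i))"

definition kraus_channel :: "(complex ^ 'n ^ 'n) list \<Rightarrow> complex ^ 'n ^ 'n \<Rightarrow> complex ^ 'n ^ 'n" where
  "kraus_channel Ks \<rho> = sum_list (map (\<lambda>K. K ** \<rho> ** adj K) Ks)"

definition kraus_dual :: "(complex ^ 'n ^ 'n) list \<Rightarrow> complex ^ 'n ^ 'n \<Rightarrow> complex ^ 'n ^ 'n" where
  "kraus_dual Ks X = sum_list (map (\<lambda>K. adj K ** X ** K) Ks)"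

text \<open>Trace preserving: \<open>\<Sum> K\<^sup>\<dagger>K = I\<close>; unital: \<open>\<Sum> K K\<^sup>\<dagger> = I\<close>.
  Complete positivity is built into the Kraus form.\<close>
definition unital_channel :: "(complex ^ 'n ^ 'n) list \<Rightarrow> bool" where
  "unital_channel Ks \<longleftrightarrow>
     sum_list (map (\<lambda>K. adj K ** K) Ks) = mat 1 \<and>
     sum_list (map (\<lambda>K. K ** adj K) Ks) = mat 1"

definition MD :: "(complex ^ 'n ^ 'n \<Rightarrow> complex ^ 'n ^ 'n) \<Rightarrow> (complex ^ 'n ^ 'n) set" where
  "MD \<phi> = {a. \<forall>b. \<phi> a ** \<phi> b = \<phi> (a ** b) \<and> \<phi> b ** \<phi> a = \<phi> (b ** a)}"

definition UCC :: "(complex ^ 'n ^ 'n \<Rightarrow> complex ^ 'n ^ 'n) \<Rightarrow> (complex ^ 'n ^ 'n \<Rightarrow> complex ^ 'n ^ 'n)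
    \<Rightarrow> (complex ^ 'n ^ 'n) set" where
  "UCC \<Phi> \<Phi>d = {\<rho>. \<Phi>d (\<Phi> \<rho>) = \<rho>}"

end

theory Submission
  imports Defs
begin
type_synonym 'n M = "complex ^ 'n ^ 'n"

lemma mm_diff_l: "(A::('n::finite) M) ** (B - C) = A ** B - A ** C"
  by (simp add: matrix_matrix_mult_def vec_eq_iff algebra_simps sum_subtractf)
lemma mm_diff_r: "((B::('n::finite) M) - C) ** A = B ** A - C ** A"
  by (simp add: matrix_matrix_mult_def vec_eq_iff algebra_simps sum_subtractf)
lemma adj_adj[simp]: "adj (adj A) = A" by (simp add: adj_def vec_eq_iff)
lemma adj_mult: "adj ((A::('n::finite) M) ** B) = adj B ** adj A"
  by (simp add: adj_def matrix_matrix_mult_def vec_eq_iff mult.commute)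
lemma adj_add: "adj ((A::('n::finite) M) + B) = adj A + adj B" by (simp add: adj_def vec_eq_iff)
lemma adj_diff: "adj ((A::('n::finite) M) - B) = adj A - adj B" by (simp add: adj_def vec_eq_iff)
lemma adj_zero[simp]: "adj 0 = 0" by (simp add: adj_def vec_eq_iff)
lemma adj_sum_list: "adj (sum_list (map f xs)) = sum_list (map (\<lambda>x. adj (f x)) xs)"
  by (induction xs) (auto simp: adj_add)
lemma mm_sum_l: "(A::('n::finite) M) ** sum_list (map f xs) = sum_list (map (\<lambda>x. A ** f x) xs)"
  by (induction xs) (auto simp: matrix_add_ldistrib)
lemma mm_add_r: "((B::('n::finite) M) + C) ** (A::'n M) = B ** A + C ** A"
  by (simp add: matrix_matrix_mult_def vec_eq_iff algebra_simps sum.distrib)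
lemma mm_sum_r: "sum_list (map (f::'a \<Rightarrow> 'n M) xs) ** (A::('n::finite) M) = sum_list (map (\<lambda>x. f x ** A) xs)"
  apply (induction xs)
   apply simp
  apply (simp only: list.map sum_list.Cons mm_add_r)
  done

definition tr :: "('n::finite) M \<Rightarrow> complex" where "tr A = (\<Sum>i\<in>UNIV. A$i$i)"
lemma tr_add: "tr (A + B) = tr A + tr B" by (simp add: tr_def sum.distrib)
lemma tr_diff: "tr (A - B) = tr A - tr B" by (simp add: tr_def sum_subtractf)
lemma tr_zero[simp]: "tr 0 = 0" by (simp add: tr_def)
lemma tr_sum_list: "tr (sum_list (map f xs)) = sum_list (map (\<lambda>x. tr (f x)) xs)"
  by (induction xs) (auto simp: tr_add)
lemma tr_comm: "tr ((A::('n::finite) M) ** B) = tr (B ** A)"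
  unfolding tr_def matrix_matrix_mult_def
  by (simp, subst sum.swap, simp add: mult.commute)

lemma cnj_mult_self: "cnj z * z = (complex_of_real (cmod z))^2"
  using complex_norm_square[of z] by (simp add: mult.commute)
definition nsq :: "('n::finite) M \<Rightarrow> real" where "nsq X = (\<Sum>i\<in>UNIV. \<Sum>j\<in>UNIV. (cmod (X$i$j))\<^sup>2)"
lemma tr_adj_mult: "tr (adj X ** X) = of_real (nsq X)"
  unfolding tr_def nsq_def adj_def matrix_matrix_mult_def
  apply (simp add: of_real_sum)
  apply (subst sum.swap)
  apply (simp add: cnj_mult_self)
  done
lemma nsq_nonneg: "nsq X \<ge> 0" by (simp add: nsq_def sum_nonneg)
lemma nsq_zero: "nsq X = 0 \<Longrightarrow> X = 0"
  unfolding nsq_def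
  by (simp add: sum_nonneg_eq_0_iff sum_nonneg vec_eq_iff)

lemma sl_diff: "sum_list (map (\<lambda>x. f x - g x) xs) = sum_list (map f xs) - sum_list (map (g::_\<Rightarrow>'b::ab_group_add) xs)"
  by (induction xs) (simp_all add: algebra_simps)
lemma sl_add: "sum_list (map (\<lambda>x. f x + g x) xs) = sum_list (map f xs) + sum_list (map (g::_\<Rightarrow>'b::ab_group_add) xs)"
  by (induction xs) (simp_all add: algebra_simps)
lemma sl_cong: "(\<And>x. x \<in> set xs \<Longrightarrow> f x = g x) \<Longrightarrow> sum_list (map f xs) = sum_list (map g xs)"
  by (metis map_cong)

lemma chan_adj: "kraus_channel Ks (adj a) = adj (kraus_channel Ks a)"
  by (simp add: kraus_channel_def adj_sum_list adj_mult matrix_mul_assoc)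

lemma I1:
  assumes u: "unital_channel Ks"
  shows "sum_list (map (\<lambda>K. adj (a ** adj K - adj K ** kraus_channel Ks a) ** (a ** adj K - adj K ** kraus_channel Ks a)) Ks)
    = kraus_channel Ks (adj a ** a) - adj (kraus_channel Ks a) ** kraus_channel Ks a"
proof -
  define E where "E = kraus_channel Ks a"
  have c: "sum_list (map (\<lambda>K. K ** adj a ** adj K) Ks) = adj E"
    using chan_adj[of Ks a] unfolding kraus_channel_def E_def .
  have t: "adj (a ** adj K - adj K ** E) ** (a ** adj K - adj K ** E) =
     ((K ** adj a ** a ** adj K - K ** adj a ** adj K ** E) - adj E ** K ** a ** adj K) + adj E ** K ** adj K ** E" for K
    by (simp add: adj_diff adj_mult mm_diff_l mm_diff_r matrix_mul_assoc algebra_simps)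
  have "sum_list (map (\<lambda>K. adj (a ** adj K - adj K ** E) ** (a ** adj K - adj K ** E)) Ks)
     = ((sum_list (map (\<lambda>K. K ** adj a ** a ** adj K) Ks) - sum_list (map (\<lambda>K. K ** adj a ** adj K) Ks) ** E)
        - adj E ** sum_list (map (\<lambda>K. K ** a ** adj K) Ks)) + adj E ** sum_list (map (\<lambda>K. K ** adj K) Ks) ** E"
    unfolding t sl_add sl_diff mm_sum_l mm_sum_r by (simp add: matrix_mul_assoc)
  also have "\<dots> = kraus_channel Ks (adj a ** a) - adj E ** E"
    using u unfolding unital_channel_def E_def
    by (simp add: c[unfolded E_def] kraus_channel_def matrix_mul_assoc)
  finally show ?thesis unfolding E_def .
qed

lemma I2:
  assumes u: "unital_channel Ks"
  shows "sum_list (map (\<lambda>K. (K ** a - kraus_channel Ks a ** K) ** adj (K ** a - kraus_channel Ks a ** K)) Ks)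
    = kraus_channel Ks (a ** adj a) - kraus_channel Ks a ** adj (kraus_channel Ks a)"
proof -
  define E where "E = kraus_channel Ks a"
  have c: "sum_list (map (\<lambda>K. K ** adj a ** adj K) Ks) = adj E"
    using chan_adj[of Ks a] unfolding kraus_channel_def E_def .
  have t: "(K ** a - E ** K) ** adj (K ** a - E ** K) =
     ((K ** a ** adj a ** adj K - K ** a ** adj K ** adj E) - E ** K ** adj a ** adj K) + E ** K ** adj K ** adj E" for K
    by (simp add: adj_diff adj_mult mm_diff_l mm_diff_r matrix_mul_assoc algebra_simps)
  have "sum_list (map (\<lambda>K. (K ** a - E ** K) ** adj (K ** a - E ** K)) Ks)
     = ((sum_list (map (\<lambda>K. K ** a ** adj a ** adj K) Ks) - sum_list (map (\<lambda>K. K ** a ** adj K) Ks) ** adj E)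
        - E ** sum_list (map (\<lambda>K. K ** adj a ** adj K) Ks)) + E ** sum_list (map (\<lambda>K. K ** adj K) Ks) ** adj E"
    unfolding t sl_add sl_diff mm_sum_l mm_sum_r by (simp add: matrix_mul_assoc)
  also have "\<dots> = kraus_channel Ks (a ** adj a) - E ** adj E"
    using u unfolding unital_channel_def E_def
    by (simp add: c[unfolded E_def] kraus_channel_def matrix_mul_assoc)
  finally show ?thesis unfolding E_def .
qed

lemma of_real_sl: "complex_of_real (sum_list (map f xs)) = sum_list (map (\<lambda>x. complex_of_real (f x)) xs)"
  by (induction xs) auto

lemma sum_zero_each:
  assumes "tr (sum_list (map (\<lambda>K. adj (X K) ** X K) Ks)) = 0"
  shows "\<forall>K\<in>set Ks. X K = (0::'n::finite M)"
proof -
  have "complex_of_real (sum_list (map (\<lambda>K. nsq (X K)) Ks)) = 0"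
    using assms by (simp add: tr_sum_list tr_adj_mult of_real_sl)
  hence "sum_list (map (\<lambda>K. nsq (X K)) Ks) = 0" by simp
  hence "\<forall>K\<in>set Ks. nsq (X K) = 0"
    by (subst (asm) sum_list_nonneg_eq_0_iff) (auto simp: nsq_nonneg)
  thus ?thesis using nsq_zero by blast
qed

definition Pc :: "('n::finite) M list \<Rightarrow> 'n M \<Rightarrow> bool" where
  "Pc Ks a \<longleftrightarrow> (\<forall>K\<in>set Ks. a ** adj K = adj K ** kraus_channel Ks a \<and> K ** a = kraus_channel Ks a ** K)"

lemma from_traces:
  assumes u: "unital_channel Ks"
    and t1: "tr (kraus_channel Ks (adj a ** a) - adj (kraus_channel Ks a) ** kraus_channel Ks a) = 0"
    and t2: "tr (kraus_channel Ks (a ** adj a) - kraus_channel Ks a ** adj (kraus_channel Ks a)) = 0"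
  shows "Pc Ks a"
proof -
  have A: "\<forall>K\<in>set Ks. a ** adj K - adj K ** kraus_channel Ks a = 0"
    by (rule sum_zero_each) (use t1 I1[OF u, of a] in simp)
  have "\<forall>K\<in>set Ks. adj (K ** a - kraus_channel Ks a ** K) = 0"
    by (rule sum_zero_each) (use t2 I2[OF u, of a] in simp)
  hence B: "\<forall>K\<in>set Ks. K ** a - kraus_channel Ks a ** K = 0"
    by (metis adj_adj adj_zero)
  show ?thesis using A B unfolding Pc_def by simp
qed

lemma MD_Pc:
  assumes u: "unital_channel Ks" and m: "a \<in> MD (kraus_channel Ks)"
  shows "Pc Ks a"
proof -
  from m have e1: "kraus_channel Ks (adj a) ** kraus_channel Ks a = kraus_channel Ks (adj a ** a)"
   and e2: "kraus_channel Ks a ** kraus_channel Ks (adj a) = kraus_channel Ks (a ** adj a)"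
    unfolding MD_def by auto
  show ?thesis
    by (rule from_traces[OF u]) (simp_all add: e1[symmetric] e2[symmetric] chan_adj)
qed

lemma tr_chan:
  assumes u: "unital_channel Ks"
  shows "tr (kraus_channel Ks X) = tr X"
proof -
  have "tr (kraus_channel Ks X) = sum_list (map (\<lambda>K. tr (adj K ** K ** X)) Ks)"
    unfolding kraus_channel_def tr_sum_list
    by (rule sl_cong) (metis tr_comm matrix_mul_assoc)
  also have "\<dots> = tr (sum_list (map (\<lambda>K. adj K ** K) Ks) ** X)"
    by (simp add: tr_sum_list mm_sum_r)
  finally show ?thesis using u by (simp add: unital_channel_def)
qed

lemma tr_dual:
  "tr (kraus_channel Ks X ** Y) = tr (X ** kraus_dual Ks Y)"
proof -
  have "tr (kraus_channel Ks X ** Y) = sum_list (map (\<lambda>K. tr (X ** (adj K ** Y ** K))) Ks)"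
    unfolding kraus_channel_def mm_sum_r tr_sum_list
    by (rule sl_cong) (metis tr_comm matrix_mul_assoc)
  also have "\<dots> = tr (X ** kraus_dual Ks Y)"
    by (simp add: tr_sum_list mm_sum_l kraus_dual_def)
  finally show ?thesis .
qed

lemma UCC_Pc:
  assumes u: "unital_channel Ks" and m: "a \<in> UCC (kraus_channel Ks) (kraus_dual Ks)"
  shows "Pc Ks a"
proof -
  from m have f: "kraus_dual Ks (kraus_channel Ks a) = a" unfolding UCC_def by auto
  have x: "tr (adj (kraus_channel Ks a) ** kraus_channel Ks a) = tr (adj a ** a)"
    using tr_dual[of Ks "adj a" "kraus_channel Ks a"] by (simp add: chan_adj f)
  show ?thesis
  proof (rule from_traces[OF u])
    show "tr (kraus_channel Ks (adj a ** a) - adj (kraus_channel Ks a) ** kraus_channel Ks a) = 0"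
      by (simp add: tr_diff tr_chan[OF u] x)
    show "tr (kraus_channel Ks (a ** adj a) - kraus_channel Ks a ** adj (kraus_channel Ks a)) = 0"
      by (simp add: tr_diff tr_chan[OF u] x tr_comm[of "kraus_channel Ks a"] tr_comm[of a])
  qed
qed

lemma Pc_MD:
  assumes u: "unital_channel Ks" and p: "Pc Ks a"
  shows "a \<in> MD (kraus_channel Ks)"
proof -
  have "kraus_channel Ks a ** kraus_channel Ks b = kraus_channel Ks (a ** b)
      \<and> kraus_channel Ks b ** kraus_channel Ks a = kraus_channel Ks (b ** a)" for b
  proof
    show "kraus_channel Ks a ** kraus_channel Ks b = kraus_channel Ks (a ** b)"
      unfolding kraus_channel_def[of Ks b] kraus_channel_def[of Ks "a ** b"] mm_sum_l
      by (rule sl_cong) (use p in \<open>simp add: Pc_def matrix_mul_assoc\<close>)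
    show "kraus_channel Ks b ** kraus_channel Ks a = kraus_channel Ks (b ** a)"
      unfolding kraus_channel_def[of Ks b] kraus_channel_def[of Ks "b ** a"] mm_sum_r
      by (rule sl_cong) (use p in \<open>simp add: Pc_def matrix_mul_assoc[symmetric]\<close>)
  qed
  thus ?thesis unfolding MD_def by auto
qed

lemma Pc_UCC:
  assumes u: "unital_channel Ks" and p: "Pc Ks a"
  shows "a \<in> UCC (kraus_channel Ks) (kraus_dual Ks)"
proof -
  have "kraus_dual Ks (kraus_channel Ks a) = sum_list (map (\<lambda>K. a ** (adj K ** K)) Ks)"
    unfolding kraus_dual_def
    by (rule sl_cong) (use p in \<open>simp add: Pc_def matrix_mul_assoc\<close>)
  also have "\<dots> = a" using u by (simp add: mm_sum_l[symmetric] unital_channel_def)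
  finally show ?thesis unfolding UCC_def by simp
qed

lemma MD_UCC_eq:
  assumes u: "unital_channel Ks"
  shows "MD (kraus_channel Ks) = UCC (kraus_channel Ks) (kraus_dual Ks)"
  using MD_Pc[OF u] Pc_MD[OF u] UCC_Pc[OF u] Pc_UCC[OF u] by blast

lemma dual_as_chan: "kraus_dual Ks = kraus_channel (map adj Ks)"
  by (rule ext) (simp add: kraus_dual_def kraus_channel_def o_def)
lemma chan_as_dual: "kraus_channel Ks = kraus_dual (map adj Ks)"
  by (rule ext) (simp add: kraus_dual_def kraus_channel_def o_def)
lemma unital_adj: "unital_channel Ks \<Longrightarrow> unital_channel (map adj Ks)"
  by (simp add: unital_channel_def o_def)

theorem theorem6:
  fixes Ks :: "(complex ^ 'n ^ 'n) list"
  assumes "unital_channel Ks"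
  shows "MD (kraus_channel Ks) = UCC (kraus_channel Ks) (kraus_dual Ks)
       \<and> UCC (kraus_channel Ks) (kraus_dual Ks) = kraus_dual Ks ` MD (kraus_dual Ks)
       \<and> kraus_dual Ks ` MD (kraus_dual Ks) = kraus_dual Ks ` UCC (kraus_dual Ks) (kraus_channel Ks)"
proof -
  have 1: "MD (kraus_channel Ks) = UCC (kraus_channel Ks) (kraus_dual Ks)"
    by (rule MD_UCC_eq[OF assms])
  have 2: "MD (kraus_dual Ks) = UCC (kraus_dual Ks) (kraus_channel Ks)"
    using MD_UCC_eq[OF unital_adj[OF assms]]
    unfolding chan_as_dual[of Ks, symmetric] dual_as_chan[of Ks, symmetric] .
  have 3: "UCC (kraus_channel Ks) (kraus_dual Ks) = kraus_dual Ks ` UCC (kraus_dual Ks) (kraus_channel Ks)"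
  proof
    show "UCC (kraus_channel Ks) (kraus_dual Ks) \<subseteq> kraus_dual Ks ` UCC (kraus_dual Ks) (kraus_channel Ks)"
    proof
      fix a assume "a \<in> UCC (kraus_channel Ks) (kraus_dual Ks)"
      hence f: "kraus_dual Ks (kraus_channel Ks a) = a" by (simp add: UCC_def)
      hence "kraus_channel Ks a \<in> UCC (kraus_dual Ks) (kraus_channel Ks)" by (simp add: UCC_def)
      thus "a \<in> kraus_dual Ks ` UCC (kraus_dual Ks) (kraus_channel Ks)"
        using f by (metis image_eqI)
    qed
    show "kraus_dual Ks ` UCC (kraus_dual Ks) (kraus_channel Ks) \<subseteq> UCC (kraus_channel Ks) (kraus_dual Ks)"
      by (auto simp: UCC_def)
  qed
  show ?thesis using 1 2 3 by simp
qed
end
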